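(* Let $T_1$ be a quadtree in $\mathbb{R}^d$ with $n$ cells. For every $j$ with $1\le j\le d+1$, the set $T_j$ of cells with brand $j$ in the extended quadtree construction has $\mathcal{O}(2^d n)$ cells.
   Context: A quadtree on an axis-aligned root hypercube $R\subset\mathbb{R}^d$ is a hierarchical decomposition in which every node has an associated axis-aligned hypercube (cell) and is either a leaf or has $2^d$ equal-sized children whose cells subdivide its cell. The size $|C|$ of a cell is its edge length. Two cells are neighbors if they are interior-disjoint and share (part of) a $(d-1)$-dimensional facet. For an integer $j$, a cell $C$ is $2^j$-smooth if every leaf neighboring $C$ has size at most $2^j|C|$. Extended quadtree: the cells of a given quadtree $T_1$ are called true cells and get brand $1$. Recursively, for $j\ge1$, let $T^j$ be the quadtree formed by $\bigcup_{i\le j}T_i$, and let $T_{j+1}$ be the minimal set of cells obtained by splitting cells of $T^j$ such that every cell of $T_j$ is $2^j$-smooth in the resulting quadtree; the cells of $T_{j+1}$ get brand $j+1$. The extended quadtree is $T^*=T^{d+1}$. *)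

theory Defs
  imports Complex_Main
begin

text \<open>Dyadic cells of the root hypercube R = [0,1]^d (w.l.o.g., by translation/scaling).
  A cell is a pair (k, a): level k (edge length 1/2^k) and integer coordinates a,
  so that the cell is the product over i<d of [a i / 2^k, (a i + 1) / 2^k].
  Coordinates at positions i >= d are required to be 0 (canonical form).\<close>

type_synonym cell = "nat \<times> (nat \<Rightarrow> nat)"

definition valid_cell :: "nat \<Rightarrow> cell \<Rightarrow> bool" where
  "valid_cell d C \<longleftrightarrow> (\<forall>i<d. snd C i < 2 ^ fst C) \<and> (\<forall>i\<ge>d. snd C i = 0)"

definition root_cell :: cell where
  "root_cell = (0, (\<lambda>_. 0))"

definition cell_size :: "cell \<Rightarrow> real" where
  "cell_size C = 1 / 2 ^ fst C"

definition lo :: "cell \<Rightarrow> nat \<Rightarrow> real" where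
  "lo C i = real (snd C i) / 2 ^ fst C"

definition hi :: "cell \<Rightarrow> nat \<Rightarrow> real" where
  "hi C i = (real (snd C i) + 1) / 2 ^ fst C"

definition children :: "nat \<Rightarrow> cell \<Rightarrow> cell set" where
  "children d C = {(Suc (fst C), b) | b.
      (\<forall>i<d. b i = 2 * snd C i \<or> b i = 2 * snd C i + 1) \<and> (\<forall>i\<ge>d. b i = 0)}"

definition parent :: "cell \<Rightarrow> cell" where
  "parent C = (fst C - 1, (\<lambda>i. snd C i div 2))"

definition is_quadtree :: "nat \<Rightarrow> cell set \<Rightarrow> bool" where
  "is_quadtree d T \<longleftrightarrow> finite T \<and> (\<forall>C\<in>T. valid_cell d C) \<and> root_cell \<in> T \<and>
     (\<forall>C\<in>T. fst C > 0 \<longrightarrow> parent C \<in> T) \<and>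
     (\<forall>C\<in>T. children d C \<inter> T \<noteq> {} \<longrightarrow> children d C \<subseteq> T)"

definition leaves :: "nat \<Rightarrow> cell set \<Rightarrow> cell set" where
  "leaves d T = {C \<in> T. children d C \<inter> T = {}}"

text \<open>Neighbors: interior-disjoint cells sharing part of a (d-1)-dimensional facet, i.e. they
  touch in one coordinate direction and their open extents overlap in all the others.\<close>
definition neighbors :: "nat \<Rightarrow> cell \<Rightarrow> cell \<Rightarrow> bool" where
  "neighbors d C D \<longleftrightarrow> (\<exists>i<d. (hi C i = lo D i \<or> hi D i = lo C i) \<and>
      (\<forall>l<d. l \<noteq> i \<longrightarrow> lo C l < hi D l \<and> lo D l < hi C l))"

definition smooth :: "nat \<Rightarrow> nat \<Rightarrow> cell set \<Rightarrow> cell \<Rightarrow> bool" where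
  "smooth d j Q C \<longleftrightarrow> (\<forall>L\<in>leaves d Q. neighbors d L C \<longrightarrow> cell_size L \<le> 2 ^ j * cell_size C)"

text \<open>Minimal refinement of Tup such that every cell of Tj is 2^j-smooth
  (the family of such refinements is closed under intersection).\<close>
definition min_refinement :: "nat \<Rightarrow> nat \<Rightarrow> cell set \<Rightarrow> cell set \<Rightarrow> cell set" where
  "min_refinement d j Tup Tj =
     \<Inter>{Q. is_quadtree d Q \<and> Tup \<subseteq> Q \<and> (\<forall>C\<in>Tj. smooth d j Q C)}"

text \<open>ext_step d T1 m = (T_{m+1}, T^{m+1}).\<close>
fun ext_step :: "nat \<Rightarrow> cell set \<Rightarrow> nat \<Rightarrow> cell set \<times> cell set" where
  "ext_step d T1 0 = (T1, T1)"
| "ext_step d T1 (Suc m) =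
     (let (Tj, Tup) = ext_step d T1 m;
          new = min_refinement d (Suc m) Tup Tj - Tup
      in (new, Tup \<union> new))"

definition brand :: "nat \<Rightarrow> cell set \<Rightarrow> nat \<Rightarrow> cell set" where
  "brand d T1 j = fst (ext_step d T1 (j - 1))"

end

theory Submission
  imports Defs
begin

lemma lo_hi: "hi C i = lo C i + 1 / 2 ^ fst C"
  by (simp add: hi_def lo_def add_divide_distrib)

lemma valid_root: "valid_cell d root_cell"
  by (simp add: valid_cell_def root_cell_def)

lemma children_valid:
  assumes "valid_cell d E" "D \<in> children d E" shows "valid_cell d D"
proof -
  obtain b where D: "D = (Suc (fst E), b)" and b: "\<forall>i<d. b i = 2 * snd E i \<or> b i = 2 * snd E i + 1"
    and b2: "\<forall>i\<ge>d. b i = 0" using assms(2) unfolding children_def by blast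
  have "\<forall>i<d. b i < 2 ^ Suc (fst E)"
  proof (intro allI impI)
    fix i assume i: "i < d"
    have "snd E i < 2 ^ fst E" using assms(1) i unfolding valid_cell_def by auto
    then have "snd E i + 1 \<le> 2 ^ fst E" by simp
    then show "b i < 2 ^ Suc (fst E)" using b i by force
  qed
  then show ?thesis using D b2 unfolding valid_cell_def by auto
qed

lemma parent_child:
  assumes "valid_cell d E" "D \<in> children d E" shows "parent D = E"
proof -
  obtain b where D: "D = (Suc (fst E), b)" and b: "\<forall>i<d. b i = 2 * snd E i \<or> b i = 2 * snd E i + 1"
    and b2: "\<forall>i\<ge>d. b i = 0" using assms(2) unfolding children_def by blast
  have "(\<lambda>i. b i div 2) = snd E"
  proof
    fix i show "b i div 2 = snd E i"
    proof (cases "i < d")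
      case True then show ?thesis using b by force
    next
      case False then show ?thesis using b2 assms(1) unfolding valid_cell_def by auto
    qed
  qed
  then show ?thesis using D by (simp add: parent_def prod_eq_iff)
qed

lemma child_parent:
  assumes "valid_cell d D" "fst D > 0" shows "D \<in> children d (parent D)"
proof -
  have "D = (Suc (fst (parent D)), snd D)" using assms(2) by (simp add: parent_def prod_eq_iff)
  moreover have "\<forall>i<d. snd D i = 2 * snd (parent D) i \<or> snd D i = 2 * snd (parent D) i + 1"
    by (simp add: parent_def) (metis div_mult_mod_eq mod2_eq_if mult.commute Suc_eq_plus1 add.right_neutral)
  moreover have "\<forall>i\<ge>d. snd D i = 0" using assms(1) unfolding valid_cell_def by auto
  ultimately show ?thesis unfolding children_def by blast
qed

lemma root_unique:
  assumes "valid_cell d D" "fst D = 0" shows "D = root_cell"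
proof -
  have "snd D = (\<lambda>_. 0)"
  proof
    fix i show "snd D i = 0"
      using assms unfolding valid_cell_def by (cases "i < d") auto
  qed
  then show ?thesis using assms(2) by (simp add: root_cell_def prod_eq_iff)
qed

lemma children_ne: "children d E \<noteq> {}"
proof -
  have "(Suc (fst E), \<lambda>i. if i < d then 2 * snd E i else 0) \<in> children d E"
    unfolding children_def by auto
  then show ?thesis by blast
qed

lemma children_img:
  "children d E = (\<lambda>S. (Suc (fst E), \<lambda>i. if i < d then 2 * snd E i + (if i \<in> S then 1 else 0) else 0)) ` Pow {..<d}"
  (is "_ = ?R")
proof
  show "children d E \<subseteq> ?R"
  proof
    fix D assume "D \<in> children d E"
    then obtain b where D: "D = (Suc (fst E), b)" and b: "\<forall>i<d. b i = 2 * snd E i \<or> b i = 2 * snd E i + 1"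
      and b2: "\<forall>i\<ge>d. b i = 0" unfolding children_def by blast
    let ?S = "{i. i < d \<and> b i = 2 * snd E i + 1}"
    have "b = (\<lambda>i. if i < d then 2 * snd E i + (if i \<in> ?S then 1 else 0) else 0)"
    proof
      fix i show "b i = (if i < d then 2 * snd E i + (if i \<in> ?S then 1 else 0) else 0)"
        using b b2 by (cases "i < d") auto
    qed
    moreover have "?S \<in> Pow {..<d}" by auto
    ultimately show "D \<in> ?R" using D by blast
  qed
next
  show "?R \<subseteq> children d E" unfolding children_def by auto
qed

lemma children_finite: "finite (children d E)"
  by (simp add: children_img)

lemma children_card: "card (children d E) \<le> 2 ^ d"
proof -
  have "card (children d E) \<le> card (Pow {..<d::nat})"
    unfolding children_img by (rule card_image_le) simp
  then show ?thesis by (simp add: card_Pow)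
qed


definition internal :: "nat \<Rightarrow> cell set \<Rightarrow> cell set" where
  "internal d T = {C \<in> T. children d C \<inter> T \<noteq> {}}"

lemma qt_cover:
  assumes "is_quadtree d Q"
  shows "Q \<subseteq> insert root_cell (\<Union>E\<in>internal d Q. children d E)"
proof
  fix D assume D: "D \<in> Q"
  have v: "valid_cell d D" using assms D unfolding is_quadtree_def by auto
  show "D \<in> insert root_cell (\<Union>E\<in>internal d Q. children d E)"
  proof (cases "fst D = 0")
    case True then show ?thesis using root_unique[OF v] by simp
  next
    case False
    then have p: "parent D \<in> Q" using assms D unfolding is_quadtree_def by auto
    have c: "D \<in> children d (parent D)" using child_parent[OF v] False by simp
    then have "parent D \<in> internal d Q" using p D unfolding internal_def by auto
    then show ?thesis using c by blast
  qed
qed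

lemma qt_card:
  assumes "is_quadtree d Q"
  shows "card Q \<le> 1 + 2 ^ d * card (internal d Q)"
proof -
  have fQ: "finite Q" using assms unfolding is_quadtree_def by auto
  have fI: "finite (internal d Q)" using fQ unfolding internal_def by auto
  have "card Q \<le> card (insert root_cell (\<Union>E\<in>internal d Q. children d E))"
    by (rule card_mono) (use fI children_finite qt_cover[OF assms] in auto)
  also have "\<dots> \<le> Suc (card (\<Union>E\<in>internal d Q. children d E))"
    using fI children_finite by (simp add: card_insert_if)
  also have "card (\<Union>E\<in>internal d Q. children d E) \<le> (\<Sum>E\<in>internal d Q. card (children d E))"
    by (rule card_UN_le[OF fI])
  also have "\<dots> \<le> (\<Sum>E\<in>internal d Q. 2 ^ d)"
    by (rule sum_mono) (rule children_card)
  finally show ?thesis by (simp add: mult.commute)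
qed

lemma finite_valid: "finite {C. valid_cell d C \<and> fst C \<le> M}"
proof -
  let ?f = "\<lambda>(k, xs). (k, \<lambda>i. if i < d then xs ! i else (0::nat))"
  have "{C. valid_cell d C \<and> fst C \<le> M} \<subseteq> ?f ` ({..M} \<times> {xs. set xs \<subseteq> {..<2^M} \<and> length xs = d})"
  proof
    fix C assume C: "C \<in> {C. valid_cell d C \<and> fst C \<le> M}"
    obtain k a where Ck: "C = (k, a)" by fastforce
    have k: "k \<le> M" and a1: "\<forall>i<d. a i < 2 ^ k" and a2: "\<forall>i\<ge>d. a i = 0"
      using C Ck unfolding valid_cell_def by auto
    let ?xs = "map a [0..<d]"
    have "a = (\<lambda>i. if i < d then ?xs ! i else 0)"
    proof
      fix i show "a i = (if i < d then ?xs ! i else 0)" using a2 by (cases "i < d") auto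
    qed
    moreover have "set ?xs \<subseteq> {..<2^M}"
    proof
      fix x assume "x \<in> set ?xs"
      then obtain i where "i < d" "x = a i" by auto
      then have "x < 2 ^ k" using a1 by auto
      also have "\<dots> \<le> 2 ^ M" using k by (simp add: power_increasing)
      finally show "x \<in> {..<2^M}" by simp
    qed
    ultimately show "C \<in> ?f ` ({..M} \<times> {xs. set xs \<subseteq> {..<2^M} \<and> length xs = d})"
      using Ck k by (intro image_eqI[of _ _ "(k, ?xs)"]) auto
  qed
  moreover have "finite ({..M} \<times> {xs. set xs \<subseteq> {..<2^M::nat} \<and> length xs = d})"
    by (intro finite_cartesian_product finite_lists_length_eq) auto
  ultimately show ?thesis by (meson finite_imageI finite_subset)
qed

lemma inter_qt:
  assumes "F \<noteq> {}" "\<forall>Q\<in>F. is_quadtree d Q"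
  shows "is_quadtree d (\<Inter>F)"
proof -
  obtain Q0 where Q0: "Q0 \<in> F" using assms(1) by blast
  have "finite (\<Inter>F)" using Q0 assms(2) unfolding is_quadtree_def
    by (meson Inter_lower finite_subset)
  moreover have "\<forall>C\<in>\<Inter>F. valid_cell d C" using Q0 assms(2) unfolding is_quadtree_def by auto
  moreover have "root_cell \<in> \<Inter>F" using assms(2) unfolding is_quadtree_def by auto
  moreover have "\<forall>C\<in>\<Inter>F. fst C > 0 \<longrightarrow> parent C \<in> \<Inter>F" using assms(2) unfolding is_quadtree_def by auto
  moreover have "\<forall>C\<in>\<Inter>F. children d C \<inter> \<Inter>F \<noteq> {} \<longrightarrow> children d C \<subseteq> \<Inter>F"
  proof (intro ballI impI)
    fix C assume C: "C \<in> \<Inter>F" and ne: "children d C \<inter> \<Inter>F \<noteq> {}"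
    show "children d C \<subseteq> \<Inter>F"
    proof
      fix D assume D: "D \<in> children d C"
      show "D \<in> \<Inter>F"
      proof
        fix Q assume Q: "Q \<in> F"
        have "children d C \<inter> Q \<noteq> {}" using ne Q by blast
        then show "D \<in> Q" using assms(2) Q C D unfolding is_quadtree_def by blast
      qed
    qed
  qed
  ultimately show ?thesis unfolding is_quadtree_def by blast
qed

inductive_set grow :: "nat \<Rightarrow> cell set \<Rightarrow> cell set" for d X where
  grow_root: "root_cell \<in> grow d X"
| grow_step: "E \<in> grow d X \<Longrightarrow> E \<in> X \<Longrightarrow> D \<in> children d E \<Longrightarrow> D \<in> grow d X"

lemma grow_valid: "D \<in> grow d X \<Longrightarrow> valid_cell d D"
  by (induction rule: grow.induct) (auto intro: valid_root children_valid)

lemma grow_cases: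
  assumes "D \<in> grow d X" "fst D > 0"
  shows "parent D \<in> grow d X \<and> parent D \<in> X"
  using assms
proof (cases rule: grow.cases)
  case grow_root then show ?thesis using assms by (simp add: root_cell_def)
next
  case (grow_step E)
  then show ?thesis using parent_child grow_valid by metis
qed

lemma grow_internal:
  assumes "valid_cell d E" "children d E \<inter> grow d X \<noteq> {}"
  shows "E \<in> X"
proof -
  obtain D where D: "D \<in> children d E" "D \<in> grow d X" using assms(2) by blast
  have "fst D > 0" using D(1) unfolding children_def by auto
  then have "parent D \<in> X" using grow_cases D(2) by blast
  moreover have "parent D = E" using parent_child assms(1) D(1) by blast
  ultimately show ?thesis by simp
qed

lemma grow_sub: "grow d X \<subseteq> insert root_cell (\<Union>E\<in>X. children d E)"
proof
  fix D assume "D \<in> grow d X"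
  then show "D \<in> insert root_cell (\<Union>E\<in>X. children d E)"
    by (cases rule: grow.cases) auto
qed

lemma grow_qt:
  assumes "finite X"
  shows "is_quadtree d (grow d X)"
proof -
  have "finite (grow d X)"
    by (rule finite_subset[OF grow_sub]) (use assms children_finite in auto)
  moreover have "\<forall>C\<in>grow d X. valid_cell d C" using grow_valid by blast
  moreover have "root_cell \<in> grow d X" by (rule grow_root)
  moreover have "\<forall>C\<in>grow d X. fst C > 0 \<longrightarrow> parent C \<in> grow d X" using grow_cases by blast
  moreover have "\<forall>C\<in>grow d X. children d C \<inter> grow d X \<noteq> {} \<longrightarrow> children d C \<subseteq> grow d X"
    using grow_internal grow_valid grow_step by blast
  ultimately show ?thesis unfolding is_quadtree_def by blast
qed

lemma grow_contains:
  assumes "is_quadtree d T" "internal d T \<subseteq> X"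
  shows "T \<subseteq> grow d X"
proof -
  have "\<forall>D\<in>T. fst D = k \<longrightarrow> D \<in> grow d X" for k
  proof (induction k)
    case 0
    then show ?case using assms(1) root_unique grow_root unfolding is_quadtree_def by metis
  next
    case (Suc k)
    show ?case
    proof (intro ballI impI)
      fix D assume D: "D \<in> T" "fst D = Suc k"
      have v: "valid_cell d D" using assms(1) D unfolding is_quadtree_def by auto
      have p: "parent D \<in> T" using assms(1) D unfolding is_quadtree_def by auto
      have fp: "fst (parent D) = k" using D(2) by (simp add: parent_def)
      have c: "D \<in> children d (parent D)" using child_parent v D(2) by simp
      have "parent D \<in> internal d T" using p c D(1) unfolding internal_def by blast
      then have "parent D \<in> X" using assms(2) by blast
      moreover have "parent D \<in> grow d X" using Suc.IH p fp by blast
      ultimately show "D \<in> grow d X" using grow_step c by blast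
    qed
  qed
  then show ?thesis by blast
qed


definition clos :: "nat \<Rightarrow> real \<Rightarrow> cell \<Rightarrow> cell \<Rightarrow> bool" where
  "clos d \<delta> Y P \<longleftrightarrow> (\<forall>i<d. lo Y i \<le> hi P i + \<delta> / 2 ^ fst P \<and> lo P i \<le> hi Y i + \<delta> / 2 ^ fst P)"

definition nearc :: "nat \<Rightarrow> cell set \<Rightarrow> real \<Rightarrow> cell \<Rightarrow> bool" where
  "nearc d T1 \<delta> P \<longleftrightarrow> (\<exists>Y\<in>internal d T1. fst Y \<ge> fst P + 1 \<and> clos d \<delta> Y P)"

lemma lo_lt_hi: "lo C i < hi C i"
  by (simp add: lo_hi)

lemma nb_touch:
  assumes "neighbors d P C" "i < d"
  shows "lo C i \<le> hi P i \<and> lo P i \<le> hi C i"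
proof -
  obtain k where k: "k < d" "hi P k = lo C k \<or> hi C k = lo P k"
    and o: "\<forall>l<d. l \<noteq> k \<longrightarrow> lo P l < hi C l \<and> lo C l < hi P l"
    using assms(1) unfolding neighbors_def by blast
  show ?thesis
  proof (cases "i = k")
    case True
    then show ?thesis using k(2) lo_lt_hi[of P i] lo_lt_hi[of C i] by auto
  next
    case False
    then show ?thesis using o assms(2) by force
  qed
qed

lemma parent_contain:
  assumes "fst C > 0"
  shows "lo (parent C) i \<le> lo C i \<and> hi C i \<le> hi (parent C) i"
proof -
  obtain k where k: "fst C = Suc k" using assms by (cases "fst C") auto
  let ?a = "snd C i"
  have fp: "fst (parent C) = k" using k by (simp add: parent_def)
  have sp: "snd (parent C) i = ?a div 2" by (simp add: parent_def)
  have n1: "?a div 2 * 2 \<le> ?a" by simp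
  have n2: "?a + 1 \<le> (?a div 2 + 1) * 2" by presburger
  have r1: "real (?a div 2) * 2 \<le> real ?a"
  proof -
    have "real (?a div 2 * 2) \<le> real ?a" using n1 by (rule of_nat_mono)
    then show ?thesis by simp
  qed
  have r2: "real ?a + 1 \<le> (real (?a div 2) + 1) * 2"
  proof -
    have "real (?a + 1) \<le> real ((?a div 2 + 1) * 2)" using n2 by (rule of_nat_mono)
    then show ?thesis by simp
  qed
  have "lo (parent C) i = real (?a div 2) * 2 / 2 ^ Suc k" using fp sp by (simp add: lo_def)
  also have "\<dots> \<le> real ?a / 2 ^ Suc k" by (rule divide_right_mono[OF r1]) simp
  also have "\<dots> = lo C i" using k by (simp add: lo_def)
  finally have 1: "lo (parent C) i \<le> lo C i" .
  have "hi C i = (real ?a + 1) / 2 ^ Suc k" using k by (simp add: hi_def)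
  also have "\<dots> \<le> (real (?a div 2) + 1) * 2 / 2 ^ Suc k" by (rule divide_right_mono[OF r2]) simp
  also have "\<dots> = hi (parent C) i" using fp sp by (simp add: hi_def field_simps)
  finally show ?thesis using 1 by simp
qed

lemma anc_exists:
  assumes qt: "is_quadtree d T1"
  shows "Y \<in> internal d T1 \<Longrightarrow> fst Y = l + 1 + n \<Longrightarrow>
    \<exists>Y'\<in>internal d T1. fst Y' = l + 1 \<and> (\<forall>i. lo Y' i \<le> lo Y i \<and> hi Y i \<le> hi Y' i)"
proof (induction n arbitrary: Y)
  case 0 then show ?case by auto
next
  case (Suc n)
  have Y: "Y \<in> T1" using Suc.prems unfolding internal_def by auto
  have pos: "fst Y > 0" using Suc.prems by simp
  have v: "valid_cell d Y" using qt Y unfolding is_quadtree_def by auto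
  have p: "parent Y \<in> T1" using qt Y pos unfolding is_quadtree_def by auto
  have "Y \<in> children d (parent Y)" using child_parent v pos by simp
  then have pi: "parent Y \<in> internal d T1" using p Y unfolding internal_def by blast
  have "fst (parent Y) = l + 1 + n" using Suc.prems by (simp add: parent_def)
  then obtain Y' where Y': "Y' \<in> internal d T1" "fst Y' = l + 1"
    "\<forall>i. lo Y' i \<le> lo (parent Y) i \<and> hi (parent Y) i \<le> hi Y' i"
    using Suc.IH pi by blast
  have pc: "\<And>i. lo (parent Y) i \<le> lo Y i \<and> hi Y i \<le> hi (parent Y) i" using parent_contain[OF pos] by blast
  have "\<forall>i. lo Y' i \<le> lo Y i \<and> hi Y i \<le> hi Y' i"
  proof
    fix i show "lo Y' i \<le> lo Y i \<and> hi Y i \<le> hi Y' i" using pc[of i] Y'(3) by (meson order_trans)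
  qed
  then show ?case using Y'(1,2) by blast
qed

lemma clos_tri:
  assumes "clos d \<delta> Y Z" "\<forall>i<d. lo Z i \<le> lo C i \<and> hi C i \<le> hi Z i"
    "\<forall>i<d. lo C i \<le> hi P i \<and> lo P i \<le> hi C i"
    "(1 + \<delta>) / 2 ^ fst Z \<le> \<epsilon> / 2 ^ fst P"
  shows "clos d \<epsilon> Y P"
  unfolding clos_def
proof (intro allI impI conjI)
  fix i assume i: "i < d"
  have hz: "hi Z i = lo Z i + 1 / 2 ^ fst Z" by (rule lo_hi)
  have s: "(1 + \<delta>) / 2 ^ fst Z = 1 / 2 ^ fst Z + \<delta> / 2 ^ fst Z" by (simp add: add_divide_distrib)
  have c1: "lo Y i \<le> hi Z i + \<delta> / 2 ^ fst Z" "lo Z i \<le> hi Y i + \<delta> / 2 ^ fst Z"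
    using assms(1) i unfolding clos_def by auto
  have c2: "lo Z i \<le> lo C i" "hi C i \<le> hi Z i" using assms(2) i by auto
  have c3: "lo C i \<le> hi P i" "lo P i \<le> hi C i" using assms(3) i by auto
  show "lo Y i \<le> hi P i + \<epsilon> / 2 ^ fst P"
    using c1 c2 c3 hz s assms(4) by linarith
  show "lo P i \<le> hi Y i + \<epsilon> / 2 ^ fst P"
    using c1 c2 c3 hz s assms(4) lo_lt_hi[of C i] by linarith
qed

lemma clos_mono:
  assumes "clos d \<delta> Y P" "\<delta> \<le> \<delta>'"
  shows "clos d \<delta>' Y P"
proof -
  have "\<delta> / 2 ^ fst P \<le> \<delta>' / 2 ^ fst P" using assms(2) by (simp add: divide_right_mono)
  show ?thesis unfolding clos_def
  proof (intro allI impI conjI)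
    fix i assume "i < d"
    then have "lo Y i \<le> hi P i + \<delta> / 2 ^ fst P" "lo P i \<le> hi Y i + \<delta> / 2 ^ fst P"
      using assms(1) unfolding clos_def by auto
    then show "lo Y i \<le> hi P i + \<delta>' / 2 ^ fst P" "lo P i \<le> hi Y i + \<delta>' / 2 ^ fst P"
      using \<open>\<delta> / 2 ^ fst P \<le> \<delta>' / 2 ^ fst P\<close> by linarith+
  qed
qed

lemma clos_bigger:
  assumes "clos d \<delta> Y P" "\<forall>i. lo Y' i \<le> lo Y i \<and> hi Y i \<le> hi Y' i"
  shows "clos d \<delta> Y' P"
  unfolding clos_def
proof (intro allI impI conjI)
  fix i assume "i < d"
  then have "lo Y i \<le> hi P i + \<delta> / 2 ^ fst P" "lo P i \<le> hi Y i + \<delta> / 2 ^ fst P"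
    using assms(1) unfolding clos_def by auto
  moreover have "lo Y' i \<le> lo Y i" "hi Y i \<le> hi Y' i" using assms(2) by auto
  ultimately show "lo Y' i \<le> hi P i + \<delta> / 2 ^ fst P" "lo P i \<le> hi Y' i + \<delta> / 2 ^ fst P" by linarith+
qed

definition fmap :: "nat \<Rightarrow> cell \<Rightarrow> cell" where
  "fmap d D = (fst D - 2, \<lambda>i. if i < d then (if snd D i mod 2 = 1 then (snd D i div 2 + 1) div 2
       else (snd D i div 2 + 1) div 2 - 1) else 0)"

lemma scale1: "(y::real) / 2 ^ (l + 1) \<le> (e + 1) / 2 ^ l + 1 / 4 / 2 ^ l \<Longrightarrow> y \<le> 2 * e + 5/2"
proof -
  assume h: "(y::real) / 2 ^ (l + 1) \<le> (e + 1) / 2 ^ l + 1 / 4 / 2 ^ l"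
  have "y / 2 ^ (l + 1) * 2 ^ (l + 1) \<le> ((e + 1) / 2 ^ l + 1 / 4 / 2 ^ l) * 2 ^ (l + 1)"
    using h by (rule mult_right_mono) simp
  moreover have "y / 2 ^ (l + 1) * 2 ^ (l + 1) = y" by simp
  moreover have "((e + 1) / 2 ^ l + 1 / 4 / 2 ^ l) * 2 ^ (l + 1) = 2 * e + 5/2" by (simp add: field_simps)
  ultimately show ?thesis by simp
qed

lemma scale2: "(e::real) / 2 ^ l \<le> (y + 1) / 2 ^ (l + 1) + 1 / 4 / 2 ^ l \<Longrightarrow> 2 * e \<le> y + 3/2"
proof -
  assume h: "(e::real) / 2 ^ l \<le> (y + 1) / 2 ^ (l + 1) + 1 / 4 / 2 ^ l"
  have "e / 2 ^ l * 2 ^ (l + 1) \<le> ((y + 1) / 2 ^ (l + 1) + 1 / 4 / 2 ^ l) * 2 ^ (l + 1)"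
    using h by (rule mult_right_mono) simp
  moreover have "e / 2 ^ l * 2 ^ (l + 1) = 2 * e" by simp
  moreover have "((y + 1) / 2 ^ (l + 1) + 1 / 4 / 2 ^ l) * 2 ^ (l + 1) = y + 3/2" by (simp add: field_simps)
  ultimately show ?thesis by simp
qed

lemma count_step:
  assumes qt: "is_quadtree d T1" and Y: "Y \<in> internal d T1" and l: "fst Y = fst P + 1"
    and v: "valid_cell d P" and c: "clos d (1/4) Y P"
  shows "P \<in> fmap d ` T1"
proof -
  define l where "l = fst P"
  define y where "y = snd Y"
  define e where "e = snd P"
  have ineq: "y i \<le> 2 * e i + 2 \<and> 2 * e i \<le> y i + 1" if i: "i < d" for i
  proof -
    have a: "real (y i) / 2 ^ (l + 1) \<le> (real (e i) + 1) / 2 ^ l + 1 / 4 / 2 ^ l"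
      using c i l unfolding clos_def lo_def hi_def y_def e_def l_def by auto
    have b: "real (e i) / 2 ^ l \<le> (real (y i) + 1) / 2 ^ (l + 1) + 1 / 4 / 2 ^ l"
      using c i l unfolding clos_def lo_def hi_def y_def e_def l_def by auto
    have a': "real (y i) \<le> 2 * real (e i) + 5 / 2" using a by (rule scale1)
    have b': "2 * real (e i) \<le> real (y i) + 3 / 2" using b by (rule scale2)
    have "y i \<le> 2 * e i + 2"
    proof (rule ccontr)
      assume "\<not> ?thesis" then have "y i \<ge> 2 * e i + 3" by simp
      then have "real (y i) \<ge> 2 * real (e i) + 3" by linarith
      then show False using a' by linarith
    qed
    moreover have "2 * e i \<le> y i + 1"
    proof (rule ccontr)
      assume "\<not> ?thesis" then have "2 * e i \<ge> y i + 2" by simp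
      then have "2 * real (e i) \<ge> real (y i) + 2" by linarith
      then show False using b' by linarith
    qed
    ultimately show ?thesis by simp
  qed
  define D where "D = (l + 2, \<lambda>i. if i < d then 2 * y i + (if e i = (y i + 1) div 2 then 1 else 0) else 0)"
  have DY: "D \<in> children d Y"
    unfolding children_def D_def using l by (auto simp: y_def l_def)
  have "children d Y \<subseteq> T1" using qt Y unfolding is_quadtree_def internal_def by blast
  then have DT: "D \<in> T1" using DY by blast
  have "fmap d D = P"
  proof -
    have "snd (fmap d D) = e"
    proof
      fix i show "snd (fmap d D) i = e i"
      proof (cases "i < d")
        case True
        then have I: "y i \<le> 2 * e i + 2" "2 * e i \<le> y i + 1" using ineq by auto
        show ?thesis
        proof (cases "e i = (y i + 1) div 2")
          case True then show ?thesis using \<open>i < d\<close> by (simp add: fmap_def D_def)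
        next
          case False
          have "(y i + 1) div 2 - 1 = e i" using I False by linarith
          then show ?thesis using \<open>i < d\<close> False by (simp add: fmap_def D_def)
        qed
      next
        case False
        then show ?thesis using v by (simp add: fmap_def D_def e_def valid_cell_def)
      qed
    qed
    moreover have "fst (fmap d D) = l" by (simp add: fmap_def D_def)
    ultimately show ?thesis by (simp add: prod_eq_iff e_def l_def)
  qed
  then show ?thesis using DT by blast
qed

lemma sz1: assumes "(a::nat) \<ge> b + 2" shows "(1 + 0) / 2 ^ a \<le> (1/4::real) / 2 ^ b"
proof -
  have "(2::real) ^ a = 2 ^ (a - b) * 2 ^ b" using assms by (simp flip: power_add)
  moreover have "(2::real) ^ (a - b) \<ge> 2 ^ 2" using assms by (intro power_increasing) auto
  ultimately have "(2::real) ^ a \<ge> 4 * 2 ^ b" by simp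
  then show ?thesis by (simp add: field_simps)
qed
lemma sz2: assumes "(a::nat) \<ge> b + 3" shows "(1 + 1/4) / 2 ^ a \<le> (1/4::real) / 2 ^ b"
proof -
  have "(2::real) ^ a = 2 ^ (a - b) * 2 ^ b" using assms by (simp flip: power_add)
  moreover have "(2::real) ^ (a - b) \<ge> 2 ^ 3" using assms by (intro power_increasing) auto
  ultimately have "(2::real) ^ a \<ge> 8 * 2 ^ b" by simp
  moreover have "(0::real) \<le> 2 ^ b" by simp
  ultimately have "(2::real) ^ a \<ge> 5 * 2 ^ b" by linarith
  then show ?thesis by (simp add: field_simps)
qed
lemma sz3: assumes "(c::nat) \<le> l + j" shows "1 / 2 ^ l \<le> (2::real) ^ j * (1 / 2 ^ c)"
proof -
  have "(2::real) ^ c \<le> 2 ^ (l + j)" using assms by (intro power_increasing) auto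
  then have "(2::real) ^ c \<le> 2 ^ j * 2 ^ l" by (simp add: power_add mult.commute)
  then show ?thesis by (simp add: field_simps)
qed

definition dl :: "nat \<Rightarrow> real" where "dl m = (if m \<le> 1 then 0 else 1/4)"

definition ext_inv :: "nat \<Rightarrow> cell set \<Rightarrow> nat \<Rightarrow> cell set \<Rightarrow> cell set \<Rightarrow> bool" where
  "ext_inv d T1 m Tj Tup \<longleftrightarrow> is_quadtree d Tup \<and> Tj \<subseteq> Tup \<and>
     (\<forall>E\<in>internal d Tup. E \<in> internal d T1 \<or> nearc d T1 (1/4) E) \<and>
     (m = 0 \<longrightarrow> Tj = T1) \<and>
     (m \<ge> 1 \<longrightarrow> (\<forall>C\<in>Tj. fst C > 0 \<and> nearc d T1 (dl m) (parent C)))"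

lemma nearc_mono: "nearc d T1 \<delta> P \<Longrightarrow> \<delta> \<le> \<delta>' \<Longrightarrow> nearc d T1 \<delta>' P"
  unfolding nearc_def using clos_mono by blast

lemma size_ok: "fst C \<le> fst L + j \<Longrightarrow> cell_size L \<le> 2 ^ j * cell_size C"
  unfolding cell_size_def by (rule sz3)

lemma nb_near:
  assumes qt: "is_quadtree d T1" and I: "ext_inv d T1 m Tj Tup"
    and C: "C \<in> Tj" and lev: "fst C \<ge> fst P + Suc m + 1" and nb: "neighbors d P C"
  shows "nearc d T1 (dl (Suc m)) P"
proof (cases "m = 0")
  case True
  then have CT: "C \<in> T1" using I C unfolding ext_inv_def by auto
  have pos: "fst C > 0" using lev by simp
  have v: "valid_cell d C" using qt CT unfolding is_quadtree_def by auto
  have p: "parent C \<in> T1" using qt CT pos unfolding is_quadtree_def by auto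
  have "C \<in> children d (parent C)" using child_parent v pos by simp
  then have pi: "parent C \<in> internal d T1" using p CT unfolding internal_def by blast
  have fp: "fst (parent C) = fst C - 1" by (simp add: parent_def)
  have "clos d 0 (parent C) P" unfolding clos_def
  proof (intro allI impI conjI)
    fix i assume i: "i < d"
    have "lo (parent C) i \<le> lo C i \<and> hi C i \<le> hi (parent C) i" by (rule parent_contain[OF pos])
    moreover have "lo C i \<le> hi P i \<and> lo P i \<le> hi C i" by (rule nb_touch[OF nb i])
    ultimately show "lo (parent C) i \<le> hi P i + 0 / 2 ^ fst P" "lo P i \<le> hi (parent C) i + 0 / 2 ^ fst P"
      by auto
  qed
  moreover have "fst (parent C) \<ge> fst P + 1" using fp lev by simp
  ultimately show ?thesis using pi True unfolding nearc_def dl_def by auto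
next
  case False
  then have "m \<ge> 1" by simp
  then have h: "fst C > 0" "nearc d T1 (dl m) (parent C)" using I C unfolding ext_inv_def by auto
  then obtain Y where Y: "Y \<in> internal d T1" "fst Y \<ge> fst (parent C) + 1" "clos d (dl m) Y (parent C)"
    unfolding nearc_def by blast
  have fp: "fst (parent C) = fst C - 1" by (simp add: parent_def)
  have sz: "(1 + dl m) / 2 ^ fst (parent C) \<le> (1/4) / 2 ^ fst P"
  proof (cases "m = 1")
    case True
    then show ?thesis using sz1[of "fst P" "fst (parent C)"] fp lev by (simp add: dl_def)
  next
    case False
    then have "m \<ge> 2" using \<open>m \<ge> 1\<close> by simp
    then show ?thesis using sz2[of "fst P" "fst (parent C)"] fp lev by (simp add: dl_def)
  qed
  have "clos d (1/4) Y P"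
    by (rule clos_tri[OF Y(3), where C=C, OF _ _ sz]) (use parent_contain[OF h(1)] nb_touch[OF nb] in auto)
  moreover have "fst Y \<ge> fst P + 1" using Y(2) fp lev by simp
  ultimately show ?thesis using Y(1) \<open>m \<ge> 1\<close> unfolding nearc_def dl_def by auto
qed


lemma inv_step:
  assumes qt: "is_quadtree d T1" and I: "ext_inv d T1 m Tj Tup"
  shows "ext_inv d T1 (Suc m) (min_refinement d (Suc m) Tup Tj - Tup) (Tup \<union> (min_refinement d (Suc m) Tup Tj - Tup))"
proof -
  have qtu: "is_quadtree d Tup" and TjU: "Tj \<subseteq> Tup"
    and intU: "\<forall>E\<in>internal d Tup. E \<in> internal d T1 \<or> nearc d T1 (1/4) E"
    using I unfolding ext_inv_def by auto
  define NB where "NB = {P. valid_cell d P \<and> (\<exists>C\<in>Tj. fst C \<ge> fst P + Suc m + 1 \<and> neighbors d P C)}"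
  define X where "X = internal d Tup \<union> NB"
  have NBnear: "nearc d T1 (dl (Suc m)) P" if "P \<in> NB" for P
    using that nb_near[OF qt I] unfolding NB_def by blast
  have fU: "finite Tup" using qtu unfolding is_quadtree_def by auto
  have fTj: "finite Tj" using fU TjU finite_subset by blast
  have "NB \<subseteq> (\<Union>C\<in>Tj. {P. valid_cell d P \<and> fst P \<le> fst C})" unfolding NB_def by force
  moreover have "finite (\<Union>C\<in>Tj. {P. valid_cell d P \<and> fst P \<le> fst C})"
    using fTj finite_valid by blast
  ultimately have fNB: "finite NB" by (rule finite_subset)
  have fX: "finite X" unfolding X_def internal_def using fU fNB by auto
  define G where "G = grow d X"
  have qG: "is_quadtree d G" unfolding G_def by (rule grow_qt[OF fX])
  have UG: "Tup \<subseteq> G" unfolding G_def by (rule grow_contains[OF qtu]) (simp add: X_def)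
  have smG: "\<forall>C\<in>Tj. smooth d (Suc m) G C"
  proof (intro ballI)
    fix C assume C: "C \<in> Tj"
    show "smooth d (Suc m) G C" unfolding smooth_def
    proof (intro ballI impI)
      fix L assume L: "L \<in> leaves d G" and nb: "neighbors d L C"
      show "cell_size L \<le> 2 ^ Suc m * cell_size C"
      proof (rule ccontr)
        assume "\<not> ?thesis"
        then have lev: "fst C \<ge> fst L + Suc m + 1" using size_ok[of C L "Suc m"] by linarith
        have LG: "L \<in> G" and lf: "children d L \<inter> G = {}" using L unfolding leaves_def by auto
        have "valid_cell d L" using LG grow_valid unfolding G_def by blast
        then have "L \<in> X" using lev nb C unfolding X_def NB_def by blast
        then have "children d L \<subseteq> G" using LG grow_step unfolding G_def by blast
        then show False using lf children_ne by blast
      qed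
    qed
  qed
  define F where "F = {Q. is_quadtree d Q \<and> Tup \<subseteq> Q \<and> (\<forall>C\<in>Tj. smooth d (Suc m) Q C)}"
  have GF: "G \<in> F" unfolding F_def using qG UG smG by blast
  define MR where "MR = min_refinement d (Suc m) Tup Tj"
  have MRF: "MR = \<Inter>F" unfolding MR_def F_def min_refinement_def by simp
  have MRG: "MR \<subseteq> G" using GF MRF by blast
  have UMR: "Tup \<subseteq> MR" using GF MRF unfolding F_def by blast
  have qMR: "is_quadtree d MR" unfolding MRF by (rule inter_qt) (use GF F_def in auto)
  have eq: "Tup \<union> (MR - Tup) = MR" using UMR by blast
  have intMR: "internal d MR \<subseteq> X"
  proof
    fix E assume E: "E \<in> internal d MR"
    then have v: "valid_cell d E" using qMR unfolding internal_def is_quadtree_def by auto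
    have "children d E \<inter> G \<noteq> {}" using E MRG unfolding internal_def by blast
    then show "E \<in> X" using grow_internal[OF v] unfolding G_def by blast
  qed
  have dl14: "dl (Suc m) \<le> 1/4" by (simp add: dl_def)
  have part3: "\<forall>E\<in>internal d MR. E \<in> internal d T1 \<or> nearc d T1 (1/4) E"
  proof
    fix E assume "E \<in> internal d MR"
    then have "E \<in> X" using intMR by blast
    then show "E \<in> internal d T1 \<or> nearc d T1 (1/4) E"
      unfolding X_def using intU NBnear nearc_mono dl14 by blast
  qed
  have part5: "\<forall>C\<in>MR - Tup. fst C > 0 \<and> nearc d T1 (dl (Suc m)) (parent C)"
  proof
    fix C assume C: "C \<in> MR - Tup"
    have v: "valid_cell d C" using C qMR unfolding is_quadtree_def by auto
    have rU: "root_cell \<in> Tup" using qtu unfolding is_quadtree_def by auto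
    have pos: "fst C > 0"
    proof (rule ccontr)
      assume "\<not> fst C > 0"
      then have "C = root_cell" using root_unique[OF v] by simp
      then show False using C rU by blast
    qed
    have p: "parent C \<in> MR" using C pos qMR unfolding is_quadtree_def by auto
    have ch: "C \<in> children d (parent C)" using child_parent v pos by simp
    then have "parent C \<in> internal d MR" using p C unfolding internal_def by blast
    then have pX: "parent C \<in> X" using intMR by blast
    have "parent C \<notin> internal d Tup"
    proof
      assume "parent C \<in> internal d Tup"
      then have "children d (parent C) \<subseteq> Tup" using qtu unfolding internal_def is_quadtree_def by blast
      then show False using ch C by blast
    qed
    then have "parent C \<in> NB" using pX unfolding X_def by blast
    then show "fst C > 0 \<and> nearc d T1 (dl (Suc m)) (parent C)" using pos NBnear by blast
  qed
  show ?thesis unfolding ext_inv_def MR_def[symmetric] eq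
    using qMR part3 part5 by auto
qed

lemma inv_all:
  assumes qt: "is_quadtree d T1"
  shows "ext_inv d T1 m (fst (ext_step d T1 m)) (snd (ext_step d T1 m))"
proof (induction m)
  case 0
  have "internal d T1 \<subseteq> internal d T1" by simp
  then show ?case using qt unfolding ext_inv_def by auto
next
  case (Suc m)
  obtain Tj Tup where e: "ext_step d T1 m = (Tj, Tup)" by fastforce
  have "ext_inv d T1 m Tj Tup" using Suc.IH e by simp
  then have "ext_inv d T1 (Suc m) (min_refinement d (Suc m) Tup Tj - Tup) (Tup \<union> (min_refinement d (Suc m) Tup Tj - Tup))"
    by (rule inv_step[OF qt])
  then show ?case using e by simp
qed

lemma internal_bound:
  assumes qt: "is_quadtree d T1" and qU: "is_quadtree d Tup"
    and h: "\<forall>E\<in>internal d Tup. E \<in> internal d T1 \<or> nearc d T1 (1/4) E"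
  shows "internal d Tup \<subseteq> T1 \<union> fmap d ` T1"
proof
  fix E assume E: "E \<in> internal d Tup"
  show "E \<in> T1 \<union> fmap d ` T1"
  proof (cases "E \<in> internal d T1")
    case True then show ?thesis unfolding internal_def by auto
  next
    case False
    then have "nearc d T1 (1/4) E" using h E by blast
    then obtain Y where Y: "Y \<in> internal d T1" "fst Y \<ge> fst E + 1" "clos d (1/4) Y E"
      unfolding nearc_def by blast
    obtain Y' where Y': "Y' \<in> internal d T1" "fst Y' = fst E + 1"
      "\<forall>i. lo Y' i \<le> lo Y i \<and> hi Y i \<le> hi Y' i"
      using anc_exists[OF qt Y(1), of "fst E" "fst Y - (fst E + 1)"] Y(2) by auto
    have c: "clos d (1/4) Y' E" by (rule clos_bigger[OF Y(3) Y'(3)])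
    have v: "valid_cell d E" using E qU unfolding internal_def is_quadtree_def by auto
    show ?thesis using count_step[OF qt Y'(1) Y'(2) v c] by blast
  qed
qed

theorem lemma13:
  shows "\<exists>c::real. \<forall>d::nat. \<forall>T1. d \<ge> 1 \<longrightarrow> is_quadtree d T1 \<longrightarrow>
           (\<forall>j\<in>{1..d+1}. finite (brand d T1 j) \<and>
              real (card (brand d T1 j)) \<le> c * 2 ^ d * real (card T1))"
proof (intro exI allI impI ballI)
  fix d :: nat and T1 j
  assume qt: "is_quadtree d T1"
  define Tj where "Tj = fst (ext_step d T1 (j - 1))"
  define Tup where "Tup = snd (ext_step d T1 (j - 1))"
  have I: "ext_inv d T1 (j - 1) Tj Tup" unfolding Tj_def Tup_def by (rule inv_all[OF qt])
  have qU: "is_quadtree d Tup" and sub: "Tj \<subseteq> Tup"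
    and h: "\<forall>E\<in>internal d Tup. E \<in> internal d T1 \<or> nearc d T1 (1/4) E"
    using I unfolding ext_inv_def by auto
  have b: "brand d T1 j = Tj" unfolding brand_def Tj_def by simp
  have fU: "finite Tup" using qU unfolding is_quadtree_def by auto
  have f1: "finite T1" using qt unfolding is_quadtree_def by auto
  have n1: "card T1 \<ge> 1"
  proof -
    have "root_cell \<in> T1" using qt unfolding is_quadtree_def by auto
    then have "T1 \<noteq> {}" by blast
    then show ?thesis using f1 by (simp add: Suc_le_eq card_gt_0_iff)
  qed
  have "card (internal d Tup) \<le> card (T1 \<union> fmap d ` T1)"
    by (rule card_mono) (use f1 internal_bound[OF qt qU h] in auto)
  also have "\<dots> \<le> card T1 + card (fmap d ` T1)" by (rule card_Un_le)
  also have "\<dots> \<le> card T1 + card T1" using card_image_le[OF f1] by simp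
  finally have ci: "card (internal d Tup) \<le> 2 * card T1" by simp
  have "card Tj \<le> card Tup" by (rule card_mono[OF fU sub])
  also have "\<dots> \<le> 1 + 2 ^ d * card (internal d Tup)" by (rule qt_card[OF qU])
  also have "\<dots> \<le> 1 + 2 ^ d * (2 * card T1)" using ci by simp
  also have "\<dots> \<le> 3 * 2 ^ d * card T1"
  proof -
    have "1 \<le> 2 ^ d * card T1" using n1 by (simp add: one_le_mult_iff)
    then show ?thesis by simp
  qed
  finally have "card Tj \<le> 3 * 2 ^ d * card T1" .
  then have "real (card Tj) \<le> real (3 * 2 ^ d * card T1)" by (rule of_nat_mono)
  then show "finite (brand d T1 j) \<and> real (card (brand d T1 j)) \<le> 3 * 2 ^ d * real (card T1)"
    using b fU sub finite_subset by auto
qed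

end
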